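(* For $G,H,H'\in\mathfrak{D}$ and $\xi\in\mathcal{H}(G,H)$, let $$\Theta_{G,H'}(\xi)=\{\zeta\in\mathcal{H}(G,H'):\mathcal{G}(\zeta)=\mathcal{G}(\xi)\}.$$ Let $R,S\in\mathfrak{D}$ and $\mathfrak{D}'\subseteq\mathfrak{D}$. Then $R\sqsubseteq_\Gamma S$ with respect to $\mathfrak{D}'$ holds if and only if $$\#\Theta_{G,R}(\xi)\le\#\Theta_{G,S}(\xi)\quad\text{for all } G\in\mathfrak{D}' \text{ and all } \xi\in\mathcal{H}(G,R).$$
   Context: **Digraphs and homomorphisms.** - A digraph $G$ is a pair $(V(G),A(G))$, where $V(G)$ is a finite non-empty set and $A(G)\subseteq V(G)\times V(G)$. Arcs are written $vw$. - A homomorphism $\xi:G\to H$ is a map $V(G)\to V(H)$ with $\xi(v)\xi(w)\in A(H)$ for all $vw\in A(G)$. $\mathcal{H}(G,H)$ is the set of homomorphisms. - $\mathfrak{D}$ is the class of all digraphs. **Connectivity.** - Two vertices $u,w$ are adjacent if $uw\in A(G)$ or $wu\in A(G)$. - For $X\subseteq V(G)$ and $v,w\in X$, the vertices $v$ and $w$ are connected in $X$ if $v=w$, or if there are $z_0=v,\dots,z_I=w$ in $X$ with consecutive terms adjacent. - $\gamma_X(v)$ is the set of $w\in X$ connected to $v$ in $X$. - $\Gamma_\xi(v):=\gamma_{\xi^{-1}(\xi(v))}(v)$. **The quotient digraph.** For $\xi\in\mathcal{H}(G,H)$, $\mathcal{G}(\xi)$ is the digraph with: - vertex set $\{\Gamma_\xi(v):v\in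 V(G)\}$, a partition of $V(G)$; - arcs $\mathfrak{a}\mathfrak{b}$ whenever there are $a\in\mathfrak{a}$, $b\in\mathfrak{b}$ with $ab\in A(G)$. **Schemes.** - For a class $\mathfrak{D}'$, let $\mathfrak{D}'_r$ be a fixed system of representatives up to isomorphism. - A Hom-scheme from $R$ to $S$ with respect to $\mathfrak{D}'$ is a family of maps $\rho_G:\mathcal{H}(G,R)\to\mathcal{H}(G,S)$, $G\in\mathfrak{D}'_r$. - It is strong if all $\rho_G$ are injective. - It is a $\Gamma$-scheme if $\Gamma_{\rho_G(\xi)}(v)=\Gamma_\xi(v)$ for all $G\in\mathfrak{D}'_r$, $\xi\in\mathcal{H}(G,R)$ and $v\in V(G)$. - $R\sqsubseteq_\Gamma S$ with respect to $\mathfrak{D}'$ means that a strong $\Gamma$-scheme exists. *)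

theory Defs
  imports "HOL-Library.FuncSet"
begin

type_synonym 'a digraph = "'a set \<times> ('a \<times> 'a) set"

definition verts :: "'a digraph \<Rightarrow> 'a set" where "verts G = fst G"
definition arcs :: "'a digraph \<Rightarrow> ('a \<times> 'a) set" where "arcs G = snd G"

definition is_digraph :: "'a digraph \<Rightarrow> bool" where
  "is_digraph G \<longleftrightarrow> finite (verts G) \<and> verts G \<noteq> {} \<and> arcs G \<subseteq> verts G \<times> verts G"

definition homs :: "'a digraph \<Rightarrow> 'b digraph \<Rightarrow> ('a \<Rightarrow> 'b) set" where
  "homs G H = {\<xi> \<in> verts G \<rightarrow>\<^sub>E verts H. \<forall>(v,w) \<in> arcs G. (\<xi> v, \<xi> w) \<in> arcs H}"

definition isomorphic :: "'a digraph \<Rightarrow> 'a digraph \<Rightarrow> bool" where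
  "isomorphic G H \<longleftrightarrow> (\<exists>f. bij_betw f (verts G) (verts H) \<and>
     (\<forall>u\<in>verts G. \<forall>v\<in>verts G. (u,v) \<in> arcs G \<longleftrightarrow> (f u, f v) \<in> arcs H))"

definition adj_in :: "'a digraph \<Rightarrow> 'a set \<Rightarrow> ('a \<times> 'a) set" where
  "adj_in G X = {(u,w). u \<in> X \<and> w \<in> X \<and> ((u,w) \<in> arcs G \<or> (w,u) \<in> arcs G)}"

definition connected_in :: "'a digraph \<Rightarrow> 'a set \<Rightarrow> 'a \<Rightarrow> 'a \<Rightarrow> bool" where
  "connected_in G X v w \<longleftrightarrow> v \<in> X \<and> w \<in> X \<and> (v = w \<or> (v,w) \<in> (adj_in G X)\<^sup>+)"

definition gamma :: "'a digraph \<Rightarrow> 'a set \<Rightarrow> 'a \<Rightarrow> 'a set" where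
  "gamma G X v = {w \<in> X. connected_in G X v w}"

definition Gamma :: "'a digraph \<Rightarrow> ('a \<Rightarrow> 'b) \<Rightarrow> 'a \<Rightarrow> 'a set" where
  "Gamma G \<xi> v = gamma G {u \<in> verts G. \<xi> u = \<xi> v} v"

definition quot :: "'a digraph \<Rightarrow> ('a \<Rightarrow> 'b) \<Rightarrow> 'a set digraph" where
  "quot G \<xi> = (let Q = {Gamma G \<xi> v | v. v \<in> verts G} in
     (Q, {(a,b). a \<in> Q \<and> b \<in> Q \<and> (\<exists>x\<in>a. \<exists>y\<in>b. (x,y) \<in> arcs G)}))"

definition Theta :: "'a digraph \<Rightarrow> 'c digraph \<Rightarrow> ('a \<Rightarrow> 'b) \<Rightarrow> ('a \<Rightarrow> 'c) set" where
  "Theta G H' \<xi> = {\<zeta> \<in> homs G H'. quot G \<zeta> = quot G \<xi>}"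

definition system_of_reps :: "'a digraph set \<Rightarrow> 'a digraph set \<Rightarrow> bool" where
  "system_of_reps D Dr \<longleftrightarrow> Dr \<subseteq> D \<and> (\<forall>G\<in>D. \<exists>!H. H \<in> Dr \<and> isomorphic G H)"

definition hom_scheme :: "'a digraph set \<Rightarrow> 'b digraph \<Rightarrow> 'c digraph
     \<Rightarrow> ('a digraph \<Rightarrow> ('a \<Rightarrow> 'b) \<Rightarrow> ('a \<Rightarrow> 'c)) \<Rightarrow> bool" where
  "hom_scheme Dr R S \<rho> \<longleftrightarrow> (\<forall>G\<in>Dr. \<forall>\<xi>\<in>homs G R. \<rho> G \<xi> \<in> homs G S)"

definition strong_scheme :: "'a digraph set \<Rightarrow> 'b digraph \<Rightarrow> 'c digraph
     \<Rightarrow> ('a digraph \<Rightarrow> ('a \<Rightarrow> 'b) \<Rightarrow> ('a \<Rightarrow> 'c)) \<Rightarrow> bool" where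
  "strong_scheme Dr R S \<rho> \<longleftrightarrow> (\<forall>G\<in>Dr. inj_on (\<rho> G) (homs G R))"

definition Gamma_scheme :: "'a digraph set \<Rightarrow> 'b digraph \<Rightarrow> 'c digraph
     \<Rightarrow> ('a digraph \<Rightarrow> ('a \<Rightarrow> 'b) \<Rightarrow> ('a \<Rightarrow> 'c)) \<Rightarrow> bool" where
  "Gamma_scheme Dr R S \<rho> \<longleftrightarrow>
     (\<forall>G\<in>Dr. \<forall>\<xi>\<in>homs G R. \<forall>v\<in>verts G. Gamma G (\<rho> G \<xi>) v = Gamma G \<xi> v)"

text \<open>R \<sqsubseteq>_\<Gamma> S w.r.t. the class with representative system Dr.\<close>
definition Gamma_leq :: "'a digraph set \<Rightarrow> 'b digraph \<Rightarrow> 'c digraph \<Rightarrow> bool" where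
  "Gamma_leq Dr R S \<longleftrightarrow> (\<exists>\<rho>. hom_scheme Dr R S \<rho> \<and> strong_scheme Dr R S \<rho> \<and> Gamma_scheme Dr R S \<rho>)"

end

theory Submission
  imports Defs
begin

lemma trancl_map_gen:
  assumes "(x,y) \<in> r\<^sup>+" and "\<And>a b. (a,b)\<in>r \<Longrightarrow> (f a, f b) \<in> s"
  shows "(f x, f y) \<in> s\<^sup>+"
  using assms(1)
proof (induction rule: trancl_induct)
  case (base y) then show ?case using assms(2) by blast
next
  case (step y z) then show ?case using assms(2) by (meson trancl.trancl_into_trancl)
qed

lemma adj_sym: "(u,w) \<in> adj_in G X \<Longrightarrow> (w,u) \<in> adj_in G X"
  unfolding adj_in_def by auto

lemma adj_trancl_sym: "(u,w) \<in> (adj_in G X)\<^sup>+ \<Longrightarrow> (w,u) \<in> (adj_in G X)\<^sup>+"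
proof -
  have "sym (adj_in G X)" by (rule symI, rule adj_sym)
  then have "sym ((adj_in G X)\<^sup>+)" by (rule sym_trancl)
  then show "(u,w) \<in> (adj_in G X)\<^sup>+ \<Longrightarrow> (w,u) \<in> (adj_in G X)\<^sup>+" by (auto dest: symD)
qed

lemma conn_sym: "connected_in G X v w \<Longrightarrow> connected_in G X w v"
  unfolding connected_in_def by (auto dest: adj_trancl_sym)

lemma conn_trans: "connected_in G X u v \<Longrightarrow> connected_in G X v w \<Longrightarrow> connected_in G X u w"
  unfolding connected_in_def by (metis (no_types) trancl_trans)

lemma Gamma_self: "v \<in> verts G \<Longrightarrow> v \<in> Gamma G \<xi> v"
  unfolding Gamma_def gamma_def connected_in_def by auto

lemma Gamma_sub: "Gamma G \<xi> v \<subseteq> verts G"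
  unfolding Gamma_def gamma_def by auto

lemma Gamma_block:
  assumes "w \<in> Gamma G \<xi> u"
  shows "Gamma G \<xi> w = Gamma G \<xi> u"
proof -
  have w: "w \<in> verts G" "\<xi> w = \<xi> u" and c: "connected_in G {x \<in> verts G. \<xi> x = \<xi> u} u w"
    using assms unfolding Gamma_def gamma_def by auto
  have X: "{x \<in> verts G. \<xi> x = \<xi> w} = {x \<in> verts G. \<xi> x = \<xi> u}" using w by auto
  have cw: "connected_in G {x \<in> verts G. \<xi> x = \<xi> u} w u" using conn_sym[OF c] .
  have "\<And>x. connected_in G {x \<in> verts G. \<xi> x = \<xi> u} w x \<longleftrightarrow> connected_in G {x \<in> verts G. \<xi> x = \<xi> u} u x"
    using conn_trans[OF c] conn_trans[OF cw] by metis
  then show ?thesis unfolding Gamma_def gamma_def X by simp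
qed

lemma quot_alt: "quot G \<xi> = (let Q = (\<lambda>v. Gamma G \<xi> v) ` verts G in
     (Q, {(a,b). a \<in> Q \<and> b \<in> Q \<and> (\<exists>x\<in>a. \<exists>y\<in>b. (x,y) \<in> arcs G)}))"
  unfolding quot_def Setcompr_eq_image ..

lemma quot_eq_iff:
  "quot G \<zeta> = quot G \<xi> \<longleftrightarrow> (\<forall>v\<in>verts G. Gamma G \<zeta> v = Gamma G \<xi> v)"
proof
  assume q: "quot G \<zeta> = quot G \<xi>"
  have f: "(\<lambda>v. Gamma G \<zeta> v) ` verts G = (\<lambda>v. Gamma G \<xi> v) ` verts G"
    using arg_cong[OF q, of fst] unfolding quot_alt Let_def fst_conv .
  show "\<forall>v\<in>verts G. Gamma G \<zeta> v = Gamma G \<xi> v"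
  proof
    fix v assume v: "v \<in> verts G"
    have "Gamma G \<zeta> v \<in> (\<lambda>v. Gamma G \<zeta> v) ` verts G" using v by (rule imageI)
    then have "Gamma G \<zeta> v \<in> (\<lambda>v. Gamma G \<xi> v) ` verts G" unfolding f .
    then obtain u where u: "u \<in> verts G" "Gamma G \<zeta> v = Gamma G \<xi> u" by (rule imageE)
    have "v \<in> Gamma G \<xi> u" using Gamma_self[OF v, of \<zeta>] unfolding u(2) .
    then have "Gamma G \<xi> v = Gamma G \<xi> u" by (rule Gamma_block)
    then show "Gamma G \<zeta> v = Gamma G \<xi> v" using u(2) by simp
  qed
next
  assume "\<forall>v\<in>verts G. Gamma G \<zeta> v = Gamma G \<xi> v"
  then have "(\<lambda>v. Gamma G \<zeta> v) ` verts G = (\<lambda>v. Gamma G \<xi> v) ` verts G"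
    by (intro image_cong refl) blast
  then show "quot G \<zeta> = quot G \<xi>" unfolding quot_alt Let_def by simp
qed

lemma finite_homs:
  assumes "finite (verts G)" "finite (verts T)"
  shows "finite (homs G T)"
proof -
  have "homs G T \<subseteq> verts G \<rightarrow>\<^sub>E verts T" unfolding homs_def by auto
  moreover have "finite (verts G \<rightarrow>\<^sub>E verts T)" using finite_PiE[OF assms(1), of "\<lambda>_. verts T"] assms(2) by simp
  ultimately show ?thesis by (rule finite_subset)
qed

lemma Gamma_iso_image:
  assumes bij: "bij_betw f (verts G) (verts H)"
    and arc: "\<forall>u\<in>verts G. \<forall>v\<in>verts G. (u,v)\<in>arcs G \<longleftrightarrow> (f u, f v) \<in> arcs H"
    and th: "\<forall>u\<in>verts G. \<theta> u = \<eta> (f u)"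
    and v: "v \<in> verts G"
  shows "f ` Gamma G \<theta> v = Gamma H \<eta> (f v)"
proof -
  define g where "g = inv_into (verts G) f"
  have inj: "inj_on f (verts G)" and im: "f ` verts G = verts H" using bij unfolding bij_betw_def by auto
  have gf: "\<And>x. x \<in> verts G \<Longrightarrow> g (f x) = x" unfolding g_def using inj by simp
  have fg: "\<And>y. y \<in> verts H \<Longrightarrow> f (g y) = y" unfolding g_def using im f_inv_into_f by metis
  have gin: "\<And>y. y \<in> verts H \<Longrightarrow> g y \<in> verts G" unfolding g_def using im inv_into_into by metis
  define X where "X = {u \<in> verts G. \<theta> u = \<theta> v}"
  define Y where "Y = {u \<in> verts H. \<eta> u = \<eta> (f v)}"
  have XY: "\<And>x. x \<in> X \<Longrightarrow> f x \<in> Y" unfolding X_def Y_def using th v im by auto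
  have YX: "\<And>y. y \<in> Y \<Longrightarrow> g y \<in> X" unfolding X_def Y_def using th v im gin fg by force
  have a1: "\<And>a b. (a,b) \<in> adj_in G X \<Longrightarrow> (f a, f b) \<in> adj_in H Y"
    unfolding adj_in_def using XY arc X_def by auto
  have a2: "\<And>a b. (a,b) \<in> adj_in H Y \<Longrightarrow> (g a, g b) \<in> adj_in G X"
  proof -
    fix a b assume ab: "(a,b) \<in> adj_in H Y"
    then have "a \<in> Y" "b \<in> Y" unfolding adj_in_def by auto
    then have "g a \<in> X" "g b \<in> X" "a \<in> verts H" "b \<in> verts H" using YX Y_def by auto
    moreover have "g a \<in> verts G" "g b \<in> verts G" using calculation X_def by auto
    ultimately show "(g a, g b) \<in> adj_in G X" using ab arc fg unfolding adj_in_def by auto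
  qed
  have c: "\<And>w. w \<in> X \<Longrightarrow> connected_in G X v w \<longleftrightarrow> connected_in H Y (f v) (f w)"
  proof -
    fix w assume w: "w \<in> X"
    have vX: "v \<in> X" using v X_def by auto
    have wG: "w \<in> verts G" using w X_def by auto
    show "connected_in G X v w \<longleftrightarrow> connected_in H Y (f v) (f w)"
    proof
      assume "connected_in G X v w"
      then show "connected_in H Y (f v) (f w)" unfolding connected_in_def
        using trancl_map_gen[of v w "adj_in G X" f "adj_in H Y"] a1 XY w vX by auto
    next
      assume h: "connected_in H Y (f v) (f w)"
      show "connected_in G X v w"
      proof (cases "f v = f w")
        case True then have "v = w" using inj v wG inj_on_def by metis
        then show ?thesis using vX unfolding connected_in_def by auto
      next
        case False
        then have "(f v, f w) \<in> (adj_in H Y)\<^sup>+" using h unfolding connected_in_def by auto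
        then have "(g (f v), g (f w)) \<in> (adj_in G X)\<^sup>+"
          using trancl_map_gen[of "f v" "f w" "adj_in H Y" g "adj_in G X"] a2 by auto
        then show ?thesis using gf v wG vX w unfolding connected_in_def by auto
      qed
    qed
  qed
  have GX: "Gamma G \<theta> v = {w \<in> X. connected_in G X v w}" unfolding Gamma_def gamma_def X_def ..
  have HY: "Gamma H \<eta> (f v) = {w \<in> Y. connected_in H Y (f v) w}" unfolding Gamma_def gamma_def Y_def ..
  show ?thesis
  proof
    show "f ` Gamma G \<theta> v \<subseteq> Gamma H \<eta> (f v)" unfolding GX HY using c XY by auto
  next
    show "Gamma H \<eta> (f v) \<subseteq> f ` Gamma G \<theta> v"
    proof
      fix y assume "y \<in> Gamma H \<eta> (f v)"
      then have y: "y \<in> Y" "connected_in H Y (f v) y" unfolding HY by auto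
      then have yH: "y \<in> verts H" using Y_def by auto
      have "g y \<in> X" using YX y by auto
      moreover have "connected_in G X v (g y)" using c[OF calculation] y fg[OF yH] by auto
      ultimately have "g y \<in> Gamma G \<theta> v" unfolding GX by auto
      then show "y \<in> f ` Gamma G \<theta> v" using fg[OF yH] by (metis imageI)
    qed
  qed
qed

lemma Gamma_agree_iff:
  assumes bij: "bij_betw f (verts G) (verts H)"
    and arc: "\<forall>u\<in>verts G. \<forall>v\<in>verts G. (u,v)\<in>arcs G \<longleftrightarrow> (f u, f v) \<in> arcs H"
    and t1: "\<forall>u\<in>verts G. \<theta>1 u = \<eta>1 (f u)"
    and t2: "\<forall>u\<in>verts G. \<theta>2 u = \<eta>2 (f u)"
  shows "(\<forall>v\<in>verts G. Gamma G \<theta>1 v = Gamma G \<theta>2 v) \<longleftrightarrow> (\<forall>w\<in>verts H. Gamma H \<eta>1 w = Gamma H \<eta>2 w)"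
proof -
  have inj: "inj_on f (verts G)" and im: "f ` verts G = verts H" using bij unfolding bij_betw_def by auto
  have eqv: "\<And>v. v \<in> verts G \<Longrightarrow> Gamma G \<theta>1 v = Gamma G \<theta>2 v \<longleftrightarrow> Gamma H \<eta>1 (f v) = Gamma H \<eta>2 (f v)"
  proof -
    fix v assume v: "v \<in> verts G"
    have "Gamma G \<theta>1 v = Gamma G \<theta>2 v \<longleftrightarrow> f ` Gamma G \<theta>1 v = f ` Gamma G \<theta>2 v"
      using inj_on_image_eq_iff[OF inj Gamma_sub[of G \<theta>1 v] Gamma_sub[of G \<theta>2 v]] by simp
    also have "\<dots> \<longleftrightarrow> Gamma H \<eta>1 (f v) = Gamma H \<eta>2 (f v)"
      using Gamma_iso_image[OF bij arc t1 v] Gamma_iso_image[OF bij arc t2 v] by simp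
    finally show "Gamma G \<theta>1 v = Gamma G \<theta>2 v \<longleftrightarrow> Gamma H \<eta>1 (f v) = Gamma H \<eta>2 (f v)" .
  qed
  show ?thesis
  proof
    assume L: "\<forall>v\<in>verts G. Gamma G \<theta>1 v = Gamma G \<theta>2 v"
    show "\<forall>w\<in>verts H. Gamma H \<eta>1 w = Gamma H \<eta>2 w"
    proof
      fix w assume "w \<in> verts H"
      then obtain v where v: "v \<in> verts G" "w = f v" using im by blast
      then show "Gamma H \<eta>1 w = Gamma H \<eta>2 w" using eqv L by blast
    qed
  next
    assume L: "\<forall>w\<in>verts H. Gamma H \<eta>1 w = Gamma H \<eta>2 w"
    show "\<forall>v\<in>verts G. Gamma G \<theta>1 v = Gamma G \<theta>2 v"
    proof
      fix v assume v: "v \<in> verts G"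
      then have "f v \<in> verts H" using im by blast
      then show "Gamma G \<theta>1 v = Gamma G \<theta>2 v" using eqv[OF v] L by blast
    qed
  qed
qed

lemma hom_transfer:
  assumes bij: "bij_betw f (verts G) (verts H)"
    and arc: "\<forall>u\<in>verts G. \<forall>v\<in>verts G. (u,v)\<in>arcs G \<longleftrightarrow> (f u, f v) \<in> arcs H"
    and dG: "is_digraph G" and dH: "is_digraph H"
  shows "\<zeta> \<in> homs G T \<Longrightarrow> restrict (\<zeta> \<circ> inv_into (verts G) f) (verts H) \<in> homs H T"
    and "\<eta> \<in> homs H T \<Longrightarrow> restrict (\<eta> \<circ> f) (verts G) \<in> homs G T"
proof -
  define g where "g = inv_into (verts G) f"
  have inj: "inj_on f (verts G)" and im: "f ` verts G = verts H" using bij unfolding bij_betw_def by auto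
  have fg: "\<And>y. y \<in> verts H \<Longrightarrow> f (g y) = y" unfolding g_def using im f_inv_into_f by metis
  have gin: "\<And>y. y \<in> verts H \<Longrightarrow> g y \<in> verts G" unfolding g_def using im inv_into_into by metis
  have aG: "arcs G \<subseteq> verts G \<times> verts G" and aH: "arcs H \<subseteq> verts H \<times> verts H"
    using dG dH unfolding is_digraph_def by auto
  {
    assume z: "\<zeta> \<in> homs G T"
    have "restrict (\<zeta> \<circ> g) (verts H) \<in> homs H T"
      unfolding homs_def
    proof (intro CollectI conjI ballI)
      show "restrict (\<zeta> \<circ> g) (verts H) \<in> verts H \<rightarrow>\<^sub>E verts T"
        using z gin unfolding homs_def by auto
    next
      fix p assume p: "p \<in> arcs H"
      obtain a b where ab: "p = (a,b)" by force
      have abH: "a \<in> verts H" "b \<in> verts H" using p ab aH by auto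
      have "(f (g a), f (g b)) \<in> arcs H" using p ab fg abH by simp
      then have "(g a, g b) \<in> arcs G" using arc gin abH by blast
      then have "(\<zeta> (g a), \<zeta> (g b)) \<in> arcs T" using z unfolding homs_def by auto
      then show "case p of (v, w) \<Rightarrow> (restrict (\<zeta> \<circ> g) (verts H) v, restrict (\<zeta> \<circ> g) (verts H) w) \<in> arcs T"
        using ab abH by simp
    qed
    then show "restrict (\<zeta> \<circ> inv_into (verts G) f) (verts H) \<in> homs H T" unfolding g_def .
  }
  {
    assume z: "\<eta> \<in> homs H T"
    show "restrict (\<eta> \<circ> f) (verts G) \<in> homs G T"
      unfolding homs_def
    proof (intro CollectI conjI ballI)
      show "restrict (\<eta> \<circ> f) (verts G) \<in> verts G \<rightarrow>\<^sub>E verts T"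
        using z im unfolding homs_def by (auto simp: PiE_iff)
    next
      fix p assume p: "p \<in> arcs G"
      obtain a b where ab: "p = (a,b)" by force
      have abG: "a \<in> verts G" "b \<in> verts G" using p ab aG by auto
      have "(f a, f b) \<in> arcs H" using p ab arc abG by blast
      then have "(\<eta> (f a), \<eta> (f b)) \<in> arcs T" using z unfolding homs_def by auto
      then show "case p of (v, w) \<Rightarrow> (restrict (\<eta> \<circ> f) (verts G) v, restrict (\<eta> \<circ> f) (verts G) w) \<in> arcs T"
        using ab abG by simp
    qed
  }
qed

lemma card_Theta_iso:
  assumes bij: "bij_betw f (verts G) (verts H)"
    and arc: "\<forall>u\<in>verts G. \<forall>v\<in>verts G. (u,v)\<in>arcs G \<longleftrightarrow> (f u, f v) \<in> arcs H"
    and dG: "is_digraph G" and dH: "is_digraph H"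
  shows "card (Theta G T \<xi>) = card (Theta H T (restrict (\<xi> \<circ> inv_into (verts G) f) (verts H)))"
proof -
  define g where "g = inv_into (verts G) f"
  have inj: "inj_on f (verts G)" and im: "f ` verts G = verts H" using bij unfolding bij_betw_def by auto
  have gf: "\<And>x. x \<in> verts G \<Longrightarrow> g (f x) = x" unfolding g_def using inj by simp
  have fg: "\<And>y. y \<in> verts H \<Longrightarrow> f (g y) = y" unfolding g_def using im f_inv_into_f by metis
  have gin: "\<And>y. y \<in> verts H \<Longrightarrow> g y \<in> verts G" unfolding g_def using im inv_into_into by metis
  have fin: "\<And>x. x \<in> verts G \<Longrightarrow> f x \<in> verts H" using im by auto
  define \<Phi> where "\<Phi> = (\<lambda>\<zeta>::'a \<Rightarrow> 'c. restrict (\<zeta> \<circ> g) (verts H))"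
  define \<Psi> where "\<Psi> = (\<lambda>\<eta>::'b \<Rightarrow> 'c. restrict (\<eta> \<circ> f) (verts G))"
  define \<xi>' where "\<xi>' = restrict (\<xi> \<circ> g) (verts H)"
  have agree0: "\<forall>u\<in>verts G. \<xi> u = \<xi>' (f u)" unfolding \<xi>'_def using gf fin by simp
  note ht = hom_transfer[OF bij arc dG dH, folded g_def]
  have agree1: "\<And>\<zeta>. \<forall>u\<in>verts G. \<zeta> u = \<Phi> \<zeta> (f u)" unfolding \<Phi>_def using gf fin by simp
  have agree2: "\<And>\<eta>. \<forall>u\<in>verts G. \<Psi> \<eta> u = \<eta> (f u)" unfolding \<Psi>_def by simp
  have "bij_betw \<Phi> (Theta G T \<xi>) (Theta H T \<xi>')"
  proof (rule bij_betw_byWitness[where f'=\<Psi>])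
    show "\<forall>a\<in>Theta G T \<xi>. \<Psi> (\<Phi> a) = a"
    proof
      fix a assume "a \<in> Theta G T \<xi>"
      then have "a \<in> extensional (verts G)" unfolding Theta_def homs_def by (auto simp: PiE_def)
      then show "\<Psi> (\<Phi> a) = a" unfolding \<Psi>_def \<Phi>_def using gf fin
        by (auto simp: extensional_def fun_eq_iff)
    qed
    show "\<forall>a\<in>Theta H T \<xi>'. \<Phi> (\<Psi> a) = a"
    proof
      fix a assume "a \<in> Theta H T \<xi>'"
      then have "a \<in> extensional (verts H)" unfolding Theta_def homs_def by (auto simp: PiE_def)
      then show "\<Phi> (\<Psi> a) = a" unfolding \<Psi>_def \<Phi>_def using fg gin
        by (auto simp: extensional_def fun_eq_iff)
    qed
    show "\<Phi> ` Theta G T \<xi> \<subseteq> Theta H T \<xi>'"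
    proof
      fix y assume "y \<in> \<Phi> ` Theta G T \<xi>"
      then obtain a where a: "a \<in> Theta G T \<xi>" "y = \<Phi> a" by auto
      then have h: "a \<in> homs G T" and "quot G a = quot G \<xi>"
        unfolding Theta_def by auto
      then have q: "\<forall>v\<in>verts G. Gamma G a v = Gamma G \<xi> v" using quot_eq_iff[of G a \<xi>] by blast
      have "\<forall>w\<in>verts H. Gamma H (\<Phi> a) w = Gamma H \<xi>' w"
        using Gamma_agree_iff[OF bij arc agree1[of a] agree0] q by blast
      then have "quot H (\<Phi> a) = quot H \<xi>'" using quot_eq_iff[of H "\<Phi> a" \<xi>'] by blast
      moreover have "\<Phi> a \<in> homs H T" using ht(1)[OF h] unfolding \<Phi>_def .
      ultimately show "y \<in> Theta H T \<xi>'" unfolding Theta_def using a by blast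
    qed
    show "\<Psi> ` Theta H T \<xi>' \<subseteq> Theta G T \<xi>"
    proof
      fix y assume "y \<in> \<Psi> ` Theta H T \<xi>'"
      then obtain a where a: "a \<in> Theta H T \<xi>'" "y = \<Psi> a" by auto
      then have h: "a \<in> homs H T" and "quot H a = quot H \<xi>'"
        unfolding Theta_def by auto
      then have q: "\<forall>w\<in>verts H. Gamma H a w = Gamma H \<xi>' w" using quot_eq_iff[of H a \<xi>'] by blast
      have "\<forall>v\<in>verts G. Gamma G (\<Psi> a) v = Gamma G \<xi> v"
        using Gamma_agree_iff[OF bij arc agree2[of a] agree0] q by blast
      then have "quot G (\<Psi> a) = quot G \<xi>" using quot_eq_iff[of G "\<Psi> a" \<xi>] by blast
      moreover have "\<Psi> a \<in> homs G T" using ht(2)[OF h] unfolding \<Psi>_def .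
      ultimately show "y \<in> Theta G T \<xi>" unfolding Theta_def using a by blast
    qed
  qed
  then show ?thesis using bij_betw_same_card unfolding \<xi>'_def g_def by blast
qed

lemma finite_Theta:
  assumes "is_digraph G" "is_digraph T"
  shows "finite (Theta G T \<xi>)"
proof -
  have "finite (verts G)" "finite (verts T)" using assms unfolding is_digraph_def by auto
  then have "finite (homs G T)" by (rule finite_homs)
  then show ?thesis unfolding Theta_def by auto
qed

theorem lemma2:
  fixes R :: "'b digraph" and S :: "'c digraph"
    and D' Dr :: "'a digraph set"
  assumes "is_digraph R" and "is_digraph S"
    and "\<forall>G\<in>D'. is_digraph G"
    and "system_of_reps D' Dr"
  shows "Gamma_leq Dr R S \<longleftrightarrow>
    (\<forall>G\<in>D'. \<forall>\<xi>\<in>homs G R. card (Theta G R \<xi>) \<le> card (Theta G S \<xi>))"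
proof
  assume "Gamma_leq Dr R S"
  then obtain \<rho> where h: "hom_scheme Dr R S \<rho>" and st: "strong_scheme Dr R S \<rho>"
    and gs: "Gamma_scheme Dr R S \<rho>" unfolding Gamma_leq_def by blast
  have Dr: "\<And>H \<xi>. H \<in> Dr \<Longrightarrow> \<xi> \<in> homs H R \<Longrightarrow> card (Theta H R \<xi>) \<le> card (Theta H S \<xi>)"
  proof -
    fix H \<xi> assume H: "H \<in> Dr" and x: "\<xi> \<in> homs H R"
    have dH: "is_digraph H" using H assms(3,4) unfolding system_of_reps_def by auto
    have "\<rho> H ` Theta H R \<xi> \<subseteq> Theta H S \<xi>"
    proof
      fix y assume "y \<in> \<rho> H ` Theta H R \<xi>"
      then obtain a where a: "a \<in> Theta H R \<xi>" "y = \<rho> H a" by auto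
      then have ah: "a \<in> homs H R" and q: "quot H a = quot H \<xi>" unfolding Theta_def by auto
      have "y \<in> homs H S" using h H ah a unfolding hom_scheme_def by auto
      moreover have "\<forall>v\<in>verts H. Gamma H y v = Gamma H a v" using gs H ah a unfolding Gamma_scheme_def by auto
      then have "quot H y = quot H a" using quot_eq_iff[of H y a] by blast
      ultimately show "y \<in> Theta H S \<xi>" using q unfolding Theta_def by auto
    qed
    moreover have "inj_on (\<rho> H) (Theta H R \<xi>)" using st H unfolding strong_scheme_def Theta_def
      by (auto intro: inj_on_subset)
    ultimately show "card (Theta H R \<xi>) \<le> card (Theta H S \<xi>)"
      using card_inj_on_le[OF _ _ finite_Theta[OF dH assms(2)]] by blast
  qed
  show "\<forall>G\<in>D'. \<forall>\<xi>\<in>homs G R. card (Theta G R \<xi>) \<le> card (Theta G S \<xi>)"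
  proof (intro ballI)
    fix G \<xi> assume G: "G \<in> D'" and x: "\<xi> \<in> homs G R"
    obtain H where H: "H \<in> Dr" "isomorphic G H" using assms(4) G unfolding system_of_reps_def by blast
    obtain f where bij: "bij_betw f (verts G) (verts H)"
      and arc: "\<forall>u\<in>verts G. \<forall>v\<in>verts G. (u,v)\<in>arcs G \<longleftrightarrow> (f u, f v) \<in> arcs H"
      using H(2) unfolding isomorphic_def by blast
    have dG: "is_digraph G" using G assms(3) by auto
    have dH: "is_digraph H" using H assms(3,4) unfolding system_of_reps_def by auto
    define \<xi>' where "\<xi>' = restrict (\<xi> \<circ> inv_into (verts G) f) (verts H)"
    have "\<xi>' \<in> homs H R" using hom_transfer(1)[OF bij arc dG dH x] unfolding \<xi>'_def .
    then have "card (Theta H R \<xi>') \<le> card (Theta H S \<xi>')" by (rule Dr[OF H(1)])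
    then show "card (Theta G R \<xi>) \<le> card (Theta G S \<xi>)"
      using card_Theta_iso[OF bij arc dG dH, of R \<xi>] card_Theta_iso[OF bij arc dG dH, of S \<xi>]
      unfolding \<xi>'_def by simp
  qed
next
  assume c: "\<forall>G\<in>D'. \<forall>\<xi>\<in>homs G R. card (Theta G R \<xi>) \<le> card (Theta G S \<xi>)"
  define A where "A = (\<lambda>(G::'a digraph) Q. {\<zeta> \<in> homs G R. quot G \<zeta> = Q})"
  define B where "B = (\<lambda>(G::'a digraph) Q. {\<zeta> \<in> homs G S. quot G \<zeta> = Q})"
  define h where "h = (\<lambda>(G::'a digraph) Q. SOME h. h ` A G Q \<subseteq> B G Q \<and> inj_on h (A G Q))"
  define \<rho> where "\<rho> = (\<lambda>(G::'a digraph) (\<xi>::'a \<Rightarrow> 'b). h G (quot G \<xi>) \<xi>)"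
  have hp: "\<And>G \<xi>. G \<in> Dr \<Longrightarrow> \<xi> \<in> homs G R \<Longrightarrow>
      h G (quot G \<xi>) ` A G (quot G \<xi>) \<subseteq> B G (quot G \<xi>) \<and> inj_on (h G (quot G \<xi>)) (A G (quot G \<xi>))"
  proof -
    fix G \<xi> assume G: "G \<in> Dr" and x: "\<xi> \<in> homs G R"
    have G': "G \<in> D'" using G assms(4) unfolding system_of_reps_def by auto
    have dG: "is_digraph G" using G' assms(3) by auto
    have eA: "A G (quot G \<xi>) = Theta G R \<xi>" and eB: "B G (quot G \<xi>) = Theta G S \<xi>"
      unfolding A_def B_def Theta_def by auto
    have "\<exists>h. h ` A G (quot G \<xi>) \<subseteq> B G (quot G \<xi>) \<and> inj_on h (A G (quot G \<xi>))"
      unfolding eA eB using card_le_inj[OF finite_Theta[OF dG assms(1)] finite_Theta[OF dG assms(2)]]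
        c G' x by blast
    then show "?thesis G \<xi>" unfolding h_def by (rule someI_ex)
  qed
  have inA: "\<And>G \<xi>. \<xi> \<in> homs G R \<Longrightarrow> \<xi> \<in> A G (quot G \<xi>)" unfolding A_def by auto
  have rB: "\<And>G \<xi>. G \<in> Dr \<Longrightarrow> \<xi> \<in> homs G R \<Longrightarrow> \<rho> G \<xi> \<in> homs G S \<and> quot G (\<rho> G \<xi>) = quot G \<xi>"
  proof -
    fix G \<xi> assume "G \<in> Dr" "\<xi> \<in> homs G R"
    then have "\<rho> G \<xi> \<in> B G (quot G \<xi>)" using hp[of G \<xi>] inA[of \<xi> G] unfolding \<rho>_def by blast
    then show "?thesis G \<xi>" unfolding B_def by auto
  qed
  have "hom_scheme Dr R S \<rho>" unfolding hom_scheme_def using rB by blast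
  moreover have "Gamma_scheme Dr R S \<rho>" unfolding Gamma_scheme_def
  proof (intro ballI)
    fix G \<xi> v assume "G \<in> Dr" "\<xi> \<in> homs G R" "v \<in> verts G"
    then show "Gamma G (\<rho> G \<xi>) v = Gamma G \<xi> v" using rB[of G \<xi>] quot_eq_iff[of G "\<rho> G \<xi>" \<xi>] by blast
  qed
  moreover have "strong_scheme Dr R S \<rho>" unfolding strong_scheme_def
  proof (intro ballI inj_onI)
    fix G x y assume G: "G \<in> Dr" and x: "x \<in> homs G R" and y: "y \<in> homs G R" and e: "\<rho> G x = \<rho> G y"
    have q: "quot G x = quot G y" using rB[OF G x] rB[OF G y] e by metis
    have "h G (quot G x) x = h G (quot G x) y" using e q unfolding \<rho>_def by simp
    moreover have "y \<in> A G (quot G x)" using q inA[OF y] by simp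
    ultimately show "x = y" using hp[OF G x] inA[OF x] by (meson inj_onD)
  qed
  ultimately show "Gamma_leq Dr R S" unfolding Gamma_leq_def by blast
qed

end
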